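(* The matrix $$U_7=S_1\otimes S_2\otimes S_0+S_2\otimes S_3\otimes S_0+S_0\otimes S_0\otimes S_1+S_3\otimes S_1\otimes S_1+S_1\otimes S_1\otimes S_2+S_2\otimes S_0\otimes S_2+S_0\otimes S_3\otimes S_3+S_3\otimes S_2\otimes S_3$$ on $\mathbb{C}^2\otimes\mathbb{C}^2\otimes\mathbb{C}^2$ is unitary and $\mathrm{sr}(U_7)=7$.
   Context: $S_0=\begin{bmatrix}1&0\\0&0\end{bmatrix}$, $S_1=\begin{bmatrix}0&1\\0&0\end{bmatrix}$, $S_2=\begin{bmatrix}0&0\\1&0\end{bmatrix}$, $S_3=\begin{bmatrix}0&0\\0&1\end{bmatrix}$. For a matrix $U$ on $\mathbb{C}^2\otimes\mathbb{C}^2\otimes\mathbb{C}^2$ (systems $A,B,C$), its Schmidt rank $\mathrm{sr}(U)$ is the least integer $r$ such that $U=\sum_{j=1}^r A_j\otimes B_j\otimes C_j$ with $A_j,B_j,C_j$ complex $2\times 2$ matrices (i.e. the tensor rank of $U$). *)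

theory Defs
  imports "Jordan_Normal_Form.Matrix"
begin

definition kron :: "'a::times mat \<Rightarrow> 'a mat \<Rightarrow> 'a mat" where
  "kron A B = mat (dim_row A * dim_row B) (dim_col A * dim_col B)
     (\<lambda>(i, j). A $$ (i div dim_row B, j div dim_col B) * B $$ (i mod dim_row B, j mod dim_col B))"

definition kron3 :: "'a::times mat \<Rightarrow> 'a mat \<Rightarrow> 'a mat \<Rightarrow> 'a mat" where
  "kron3 A B C = kron (kron A B) C"

definition adj :: "complex mat \<Rightarrow> complex mat" where
  "adj U = mat (dim_col U) (dim_row U) (\<lambda>(i, j). cnj (U $$ (j, i)))"

definition unitary_mat :: "complex mat \<Rightarrow> bool" where
  "unitary_mat U \<longleftrightarrow> square_mat U \<and> U * adj U = 1\<^sub>m (dim_row U) \<and> adj U * U = 1\<^sub>m (dim_row U)"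

definition S0 :: "complex mat" where "S0 = mat_of_rows_list 2 [[1, 0], [0, 0]]"
definition S1 :: "complex mat" where "S1 = mat_of_rows_list 2 [[0, 1], [0, 0]]"
definition S2 :: "complex mat" where "S2 = mat_of_rows_list 2 [[0, 0], [1, 0]]"
definition S3 :: "complex mat" where "S3 = mat_of_rows_list 2 [[0, 0], [0, 1]]"

definition msum :: "nat \<Rightarrow> nat \<Rightarrow> (nat \<Rightarrow> complex mat) \<Rightarrow> nat \<Rightarrow> complex mat" where
  "msum n m F r = foldr (\<lambda>j acc. F j + acc) [0..<r] (0\<^sub>m n m)"

definition is_sr_decomp :: "complex mat \<Rightarrow> nat \<Rightarrow> bool" where
  "is_sr_decomp U r \<longleftrightarrow> (\<exists>A B C :: nat \<Rightarrow> complex mat.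
     (\<forall>j<r. A j \<in> carrier_mat 2 2 \<and> B j \<in> carrier_mat 2 2 \<and> C j \<in> carrier_mat 2 2) \<and>
     U = msum 8 8 (\<lambda>j. kron3 (A j) (B j) (C j)) r)"

definition schmidt_rank :: "complex mat \<Rightarrow> nat" where
  "schmidt_rank U = (LEAST r. is_sr_decomp U r)"

definition U7 :: "complex mat" where
  "U7 = kron3 S1 S2 S0 + kron3 S2 S3 S0 + kron3 S0 S0 S1 + kron3 S3 S1 S1
      + kron3 S1 S1 S2 + kron3 S2 S0 S2 + kron3 S0 S3 S3 + kron3 S3 S2 S3"

end

theory Submission
  imports Defs "Jordan_Normal_Form.Determinant"
begin

datatype i4 = I0 | I1 | I2 | I3

lemma all_i4: "(\<forall>t. P t) \<longleftrightarrow> P I0 \<and> P I1 \<and> P I2 \<and> P I3" by (metis i4.exhaust)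

definition sum4 :: "(i4 \<Rightarrow> complex) \<Rightarrow> complex" where "sum4 f = f I0 + f I1 + f I2 + f I3"
definition dot :: "(i4 \<Rightarrow> complex) \<Rightarrow> (i4 \<Rightarrow> complex) \<Rightarrow> complex" where "dot v w = sum4 (\<lambda>t. v t * w t)"
definition nz :: "(i4 \<Rightarrow> complex) \<Rightarrow> bool" where "nz x \<longleftrightarrow> (x I0 \<noteq> 0 \<or> x I1 \<noteq> 0 \<or> x I2 \<noteq> 0 \<or> x I3 \<noteq> 0)"

definition n2i :: "nat \<Rightarrow> i4" where "n2i j = (if j = 0 then I0 else if j = 1 then I1 else if j = 2 then I2 else I3)"
definition i2n :: "i4 \<Rightarrow> nat" where "i2n t = (case t of I0 \<Rightarrow> 0 | I1 \<Rightarrow> 1 | I2 \<Rightarrow> 2 | I3 \<Rightarrow> 3)"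

lemma less4: "(j::nat) < 4 \<longleftrightarrow> j = 0 \<or> j = 1 \<or> j = 2 \<or> j = 3" by auto

lemma i2n_lt[simp]: "i2n t < 4" by (cases t) (auto simp: i2n_def)
lemma n2i_i2n[simp]: "n2i (i2n t) = t" by (cases t) (auto simp: i2n_def n2i_def)
lemma i2n_n2i: "j < 4 \<Longrightarrow> i2n (n2i j) = j" by (auto simp: less4 i2n_def n2i_def)

definition rowsM :: "(i4 \<Rightarrow> i4 \<Rightarrow> complex) \<Rightarrow> complex mat" where
  "rowsM r = mat 4 4 (\<lambda>(i,j). r (n2i i) (n2i j))"

lemma rowsM_carrier: "rowsM r \<in> carrier_mat 4 4" by (simp add: rowsM_def)

lemma sum_4: "(\<Sum>j\<in>{0..<4::nat}. f j) = f 0 + f 1 + f 2 + (f 3 :: complex)"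
  by (simp add: eval_nat_numeral atLeast0LessThan)

lemma rowsM_mult: assumes "v \<in> carrier_vec 4" "i < 4"
  shows "(rowsM r *\<^sub>v v) $ i = dot (r (n2i i)) (\<lambda>t. v $ i2n t)"
  using assms by (simp add: rowsM_def scalar_prod_def sum_4 dot_def sum4_def n2i_def i2n_def)

lemma rowsM_tmult: assumes "v \<in> carrier_vec 4" "i < 4"
  shows "(transpose_mat (rowsM r) *\<^sub>v v) $ i = sum4 (\<lambda>s. v $ i2n s * r s (n2i i))"
  using assms by (simp add: rowsM_def scalar_prod_def sum_4 sum4_def n2i_def i2n_def algebra_simps)

lemma KER: "det (rowsM r) = 0 \<longleftrightarrow> (\<exists>y. nz y \<and> (\<forall>s. dot (r s) y = 0))"
proof
  assume "det (rowsM r) = 0"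
  then obtain v where v: "v \<in> carrier_vec 4" "v \<noteq> 0\<^sub>v 4" "rowsM r *\<^sub>v v = 0\<^sub>v 4"
    using det_0_iff_vec_prod_zero[OF rowsM_carrier] by blast
  define y where "y = (\<lambda>t. v $ i2n t)"
  have "nz y"
  proof (rule ccontr)
    assume "\<not> nz y"
    then have "\<forall>t. v $ i2n t = 0" by (auto simp: nz_def y_def all_i4)
    then have "\<forall>j<4. v $ j = 0" by (metis i2n_n2i)
    then have "v = 0\<^sub>v 4" using v(1) by (intro eq_vecI) auto
    with v(2) show False by simp
  qed
  moreover have "dot (r s) y = 0" for s
  proof -
    have "(rowsM r *\<^sub>v v) $ i2n s = 0" using v(3) by simp
    then show ?thesis using rowsM_mult[OF v(1) i2n_lt, of r s] by (simp add: y_def)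
  qed
  ultimately show "\<exists>y. nz y \<and> (\<forall>s. dot (r s) y = 0)" by blast
next
  assume "\<exists>y. nz y \<and> (\<forall>s. dot (r s) y = 0)"
  then obtain y where y: "nz y" "\<And>s. dot (r s) y = 0" by blast
  define v where "v = vec 4 (\<lambda>j. y (n2i j))"
  have vc: "v \<in> carrier_vec 4" by (simp add: v_def)
  have vy: "(\<lambda>t. v $ i2n t) = y" by (simp add: v_def)
  have "v \<noteq> 0\<^sub>v 4"
  proof
    assume "v = 0\<^sub>v 4"
    then have "\<forall>t. v $ i2n t = 0" by simp
    then have "\<forall>t. y t = 0" using fun_cong[OF vy] by metis
    with y(1) show False by (simp add: nz_def)
  qed
  moreover have "rowsM r *\<^sub>v v = 0\<^sub>v 4"
    by (rule eq_vecI) (use rowsM_mult[OF vc] y(2) vy in \<open>auto simp: rowsM_def\<close>)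
  ultimately show "det (rowsM r) = 0"
    using det_0_iff_vec_prod_zero[OF rowsM_carrier] vc by blast
qed

lemma DEP: "det (rowsM r) = 0 \<longleftrightarrow> (\<exists>d. nz d \<and> (\<forall>t. sum4 (\<lambda>s. d s * r s t) = 0))"
proof -
  have tc: "transpose_mat (rowsM r) \<in> carrier_mat 4 4" by (simp add: rowsM_def)
  have "det (rowsM r) = det (transpose_mat (rowsM r))" using det_transpose[OF rowsM_carrier] by simp
  also have "\<dots> = 0 \<longleftrightarrow> (\<exists>v. v \<in> carrier_vec 4 \<and> v \<noteq> 0\<^sub>v 4 \<and> transpose_mat (rowsM r) *\<^sub>v v = 0\<^sub>v 4)"
    using det_0_iff_vec_prod_zero[OF tc] .
  also have "\<dots> \<longleftrightarrow> (\<exists>d. nz d \<and> (\<forall>t. sum4 (\<lambda>s. d s * r s t) = 0))"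
  proof
    assume "\<exists>v. v \<in> carrier_vec 4 \<and> v \<noteq> 0\<^sub>v 4 \<and> transpose_mat (rowsM r) *\<^sub>v v = 0\<^sub>v 4"
    then obtain v where v: "v \<in> carrier_vec 4" "v \<noteq> 0\<^sub>v 4" "transpose_mat (rowsM r) *\<^sub>v v = 0\<^sub>v 4" by blast
    define d where "d = (\<lambda>t. v $ i2n t)"
    have "nz d"
    proof (rule ccontr)
      assume "\<not> nz d"
      then have "\<forall>t. v $ i2n t = 0" by (auto simp: nz_def d_def all_i4)
      then have "\<forall>j<4. v $ j = 0" by (metis i2n_n2i)
      then have "v = 0\<^sub>v 4" using v(1) by (intro eq_vecI) auto
      with v(2) show False by simp
    qed
    moreover have "sum4 (\<lambda>s. d s * r s t) = 0" for t
    proof -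
      have "(transpose_mat (rowsM r) *\<^sub>v v) $ i2n t = 0" using v(3) by simp
      then show ?thesis using rowsM_tmult[OF v(1) i2n_lt, of r t] by (simp add: d_def)
    qed
    ultimately show "\<exists>d. nz d \<and> (\<forall>t. sum4 (\<lambda>s. d s * r s t) = 0)" by blast
  next
    assume "\<exists>d. nz d \<and> (\<forall>t. sum4 (\<lambda>s. d s * r s t) = 0)"
    then obtain d where d: "nz d" "\<And>t. sum4 (\<lambda>s. d s * r s t) = 0" by blast
    define v where "v = vec 4 (\<lambda>j. d (n2i j))"
    have vc: "v \<in> carrier_vec 4" by (simp add: v_def)
    have vy: "(\<lambda>t. v $ i2n t) = d" by (simp add: v_def)
    have "v \<noteq> 0\<^sub>v 4"
    proof
      assume "v = 0\<^sub>v 4"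
      then have "\<forall>t. v $ i2n t = 0" by simp
      then have "\<forall>t. d t = 0" using fun_cong[OF vy] by metis
      with d(1) show False by (simp add: nz_def)
    qed
    moreover have "transpose_mat (rowsM r) *\<^sub>v v = 0\<^sub>v 4"
      by (rule eq_vecI) (use rowsM_tmult[OF vc] d(2) vy in \<open>auto simp: rowsM_def\<close>)
    ultimately show "\<exists>v. v \<in> carrier_vec 4 \<and> v \<noteq> 0\<^sub>v 4 \<and> transpose_mat (rowsM r) *\<^sub>v v = 0\<^sub>v 4"
      using vc by blast
  qed
  finally show ?thesis .
qed

lemma D1: "\<exists>y. nz y \<and> dot v1 y = 0 \<and> dot v2 y = 0 \<and> dot v3 y = 0"
proof -
  define r where "r = (\<lambda>s. if s = I0 then v1 else if s = I1 then v2 else if s = I2 then v3 else (\<lambda>_. 0))"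
  have "det (rowsM r) = 0"
    unfolding DEP by (rule exI[of _ "\<lambda>s. if s = I3 then 1 else 0"]) (simp add: nz_def sum4_def r_def)
  then obtain y where "nz y" "\<And>s. dot (r s) y = 0" unfolding KER by blast
  then show ?thesis by (metis r_def i4.distinct)
qed


definition qf :: "(i4 \<Rightarrow> complex) \<Rightarrow> complex" where "qf x = x I0 * x I1 - x I2 * x I3"
definition bet :: "(i4 \<Rightarrow> complex) \<Rightarrow> (i4 \<Rightarrow> complex) \<Rightarrow> complex" where
  "bet x y = x I0 * y I1 + x I1 * y I0 - x I2 * y I3 - x I3 * y I2"
definition indep3 :: "(i4 \<Rightarrow> complex) \<Rightarrow> (i4 \<Rightarrow> complex) \<Rightarrow> (i4 \<Rightarrow> complex) \<Rightarrow> bool" where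
  "indep3 v1 v2 v3 \<longleftrightarrow> (\<forall>\<alpha> \<beta> \<gamma>. (\<forall>t. \<alpha> * v1 t + \<beta> * v2 t + \<gamma> * v3 t = 0) \<longrightarrow> \<alpha> = 0 \<and> \<beta> = 0 \<and> \<gamma> = 0)"
definition par :: "(i4 \<Rightarrow> complex) \<Rightarrow> (i4 \<Rightarrow> complex) \<Rightarrow> bool" where
  "par x y \<longleftrightarrow> (\<exists>\<mu>. \<forall>t. y t = \<mu> * x t)"

lemma indep3D: "indep3 v1 v2 v3 \<Longrightarrow> (\<And>t. \<alpha> * v1 t + \<beta> * v2 t + \<gamma> * v3 t = 0) \<Longrightarrow> \<alpha> = 0 \<and> \<beta> = 0 \<and> \<gamma> = 0"
  unfolding indep3_def by blast

lemma bet_sym: "bet x y = bet y x" by (simp add: bet_def algebra_simps)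

lemma par_comb: "(\<forall>t. b * x t + c * y t = 0) \<Longrightarrow> c \<noteq> 0 \<Longrightarrow> par x y"
  unfolding par_def
  by (rule exI[of _ "-b/c"]) (auto simp: field_simps eq_neg_iff_add_eq_0 add.commute)

lemma nz_comb: "(\<forall>t. b * x t + c * y t = 0) \<Longrightarrow> c = 0 \<Longrightarrow> nz x \<Longrightarrow> b = 0"
  by (auto simp: nz_def all_i4)

lemma dot_comb: "dot v (\<lambda>t. \<alpha> * x t + \<beta> * y t) = \<alpha> * dot v x + \<beta> * dot v y"
  by (simp add: dot_def sum4_def algebra_simps)

lemma cnj_dot: assumes "nz y" shows "dot (\<lambda>t. cnj (y t)) y \<noteq> 0"
proof
  assume h: "dot (\<lambda>t. cnj (y t)) y = 0"
  have e: "cnj z * z = complex_of_real ((cmod z)^2)" for z by (metis complex_norm_square mult.commute)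
  have "complex_of_real ((cmod (y I0))^2 + (cmod (y I1))^2 + (cmod (y I2))^2 + (cmod (y I3))^2) = 0"
    using h by (simp add: dot_def sum4_def e)
  then have "(cmod (y I0))^2 + (cmod (y I1))^2 + (cmod (y I2))^2 + (cmod (y I3))^2 = 0"
    by (simp only: of_real_eq_0_iff)
  then have "cmod (y I0) = 0 \<and> cmod (y I1) = 0 \<and> cmod (y I2) = 0 \<and> cmod (y I3) = 0"
    by (simp add: add_nonneg_eq_0_iff)
  with assms show False by (simp add: nz_def)
qed

definition Gv :: "(i4 \<Rightarrow> complex) \<Rightarrow> (i4 \<Rightarrow> complex)" where
  "Gv x = (\<lambda>t. case t of I0 \<Rightarrow> x I1 | I1 \<Rightarrow> x I0 | I2 \<Rightarrow> - x I3 | I3 \<Rightarrow> - x I2)"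

lemma dot_Gv: "dot w (Gv x) = bet x w" by (simp add: dot_def sum4_def Gv_def bet_def algebra_simps)

lemma LemI:
  assumes ind: "indep3 w1 w2 w3"
  and b: "bet w1 w1 = 0" "bet w2 w2 = 0" "bet w3 w3 = 0" "bet w1 w2 = 0" "bet w1 w3 = 0" "bet w2 w3 = 0"
  shows False
proof -
  obtain y where y: "nz y" "dot w1 y = 0" "dot w2 y = 0" "dot w3 y = 0" using D1 by blast
  define v where "v = (\<lambda>t. cnj (y t))"
  have vy: "dot v y \<noteq> 0" using cnj_dot[OF y(1)] by (simp add: v_def)
  define r where "r = (\<lambda>s. if s = I0 then w1 else if s = I1 then w2 else if s = I2 then w3 else v)"
  have detne: "det (rowsM r) \<noteq> 0"
  proof
    assume "det (rowsM r) = 0"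
    then obtain d where d: "nz d" "\<And>t. sum4 (\<lambda>s. d s * r s t) = 0" unfolding DEP by blast
    then have d': "\<And>t. d I0 * w1 t + d I1 * w2 t + d I2 * w3 t + d I3 * v t = 0"
      by (simp add: sum4_def r_def)
    have "dot (\<lambda>t. d I0 * w1 t + d I1 * w2 t + d I2 * w3 t + d I3 * v t) y = 0"
      using d' by (simp add: dot_def sum4_def)
    moreover have "dot (\<lambda>t. d I0 * w1 t + d I1 * w2 t + d I2 * w3 t + d I3 * v t) y
       = d I0 * dot w1 y + d I1 * dot w2 y + d I2 * dot w3 y + d I3 * dot v y"
      by (simp add: dot_def sum4_def algebra_simps)
    ultimately have "d I3 * dot v y = 0" using y by simp
    then have "d I3 = 0" using vy by simp
    then have "\<forall>t. d I0 * w1 t + d I1 * w2 t + d I2 * w3 t = 0" using d' by simp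
    then have "d I0 = 0 \<and> d I1 = 0 \<and> d I2 = 0" using indep3D[OF ind] by blast
    with \<open>d I3 = 0\<close> d(1) show False by (simp add: nz_def)
  qed
  have O: "\<exists>lam. \<forall>t. p t = lam * y t" if p: "dot w1 p = 0" "dot w2 p = 0" "dot w3 p = 0" for p
  proof -
    define z where "z = (\<lambda>t. dot v y * p t + (- dot v p) * y t)"
    have "\<forall>s. dot (r s) z = 0"
      unfolding all_i4 z_def dot_comb r_def using p y by simp
    then have "\<not> nz z" using detne unfolding KER by blast
    then have "\<forall>t. z t = 0" by (auto simp: nz_def all_i4)
    then have "\<forall>t. p t = (dot v p / dot v y) * y t" using vy
      by (auto simp: z_def field_simps eq_neg_iff_add_eq_0)
    then show ?thesis by blast
  qed
  obtain l1 where l1: "\<forall>t. Gv w1 t = l1 * y t"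
    using O[of "Gv w1"] b by (auto simp: dot_Gv bet_sym)
  obtain l2 where l2: "\<forall>t. Gv w2 t = l2 * y t"
    using O[of "Gv w2"] b by (auto simp: dot_Gv bet_sym)
  show False
  proof (cases "l1 = 0")
    case True
    then have "\<forall>t. 1 * w1 t + 0 * w2 t + 0 * w3 t = 0" using l1 by (simp add: Gv_def all_i4)
    then show False using indep3D[OF ind, of 1 0 0] by simp
  next
    case False
    have c: "w1 I3 = - (l1 * y I2)" "w1 I2 = -(l1*y I3)" "w2 I3 = -(l2 * y I2)" "w2 I2 = -(l2 * y I3)"
      "w1 I1 = l1 * y I0" "w1 I0 = l1 * y I1" "w2 I1 = l2 * y I0" "w2 I0 = l2 * y I1"
      using l1 l2 by (auto simp: Gv_def all_i4; metis minus_minus)+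
    have "\<forall>t. Gv (\<lambda>t. l2 * w1 t + (- l1) * w2 t) t = 0" by (simp add: Gv_def all_i4 c)
    then have "\<forall>t. l2 * w1 t + (- l1) * w2 t + 0 * w3 t = 0" by (simp add: Gv_def all_i4)
    then have "l1 = 0" using indep3D[OF ind, of l2 "-l1" 0] by simp
    with False show False by simp
  qed
qed


lemma AL1: fixes m11 m12 m21 m22 p1 p2 r1 r2 :: complex
assumes e: "m11*p1 + m12*p2 = 0" "m21*p1 + m22*p2 = 0" "r1*m11 + r2*m21 = 0" "r1*m12 + r2*m22 = 0"
 and p: "p1 \<noteq> 0 \<or> p2 \<noteq> 0" and r: "r1 \<noteq> 0 \<or> r2 \<noteq> 0"
shows "\<exists>l. m11 = l*r2*p2 \<and> m12 = -l*r2*p1 \<and> m21 = -l*r1*p2 \<and> m22 = l*r1*p1"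
proof -
  have negsolve: "a + b = 0 \<Longrightarrow> b = -(a::complex)" for a b by (simp add: eq_neg_iff_add_eq_0 add.commute)
  show ?thesis
  proof (cases "p2 = 0")
    case False
    have "m12*p2 = -(m11*p1)" "m22*p2 = - (m21*p1)" using e(1,2) negsolve by blast+
    then have m12: "m12 = - m11*p1/p2" and m22: "m22 = - m21*p1/p2" using False by (auto simp: field_simps)
    show ?thesis
    proof (cases "r2 = 0")
      case False
      have "r2*m21 = -(r1*m11)" using e(3) negsolve by blast
      then have m21: "m21 = - r1*m11/r2" using False by (auto simp: field_simps)
      show ?thesis
        by (rule exI[of _ "m11/(r2*p2)"]) (use \<open>p2\<noteq>0\<close> False m12 m22 m21 in \<open>auto simp: field_simps\<close>)
    next
      case True
      with r have "r1 \<noteq> 0" by auto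
      with True e have "m11 = 0" "m12 = 0" by auto
      show ?thesis
        by (rule exI[of _ "-m21/(r1*p2)"]) (use \<open>p2\<noteq>0\<close> True \<open>r1\<noteq>0\<close> m22 \<open>m11=0\<close> \<open>m12=0\<close> in \<open>auto simp: field_simps\<close>)
    qed
  next
    case True
    with p have "p1 \<noteq> 0" by auto
    with True e have "m11 = 0" "m21 = 0" by auto
    show ?thesis
    proof (cases "r2 = 0")
      case False
      have "r2*m22 = -(r1*m12)" using e(4) negsolve by blast
      then have "m22 = - r1*m12/r2" using False by (auto simp: field_simps)
      then show ?thesis
        by (intro exI[of _ "-m12/(r2*p1)"]) (use \<open>p1\<noteq>0\<close> False True \<open>m11=0\<close> \<open>m21=0\<close> in \<open>auto simp: field_simps\<close>)
    next
      case r2: True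
      with r have "r1 \<noteq> 0" by auto
      with r2 e have "m12 = 0" by auto
      show ?thesis
        by (intro exI[of _ "m22/(r1*p1)"]) (use \<open>p1\<noteq>0\<close> \<open>r1\<noteq>0\<close> r2 True \<open>m11=0\<close> \<open>m21=0\<close> \<open>m12=0\<close> in \<open>auto simp: field_simps\<close>)
    qed
  qed
qed

lemma AL2:
  assumes p: "p1 \<noteq> 0 \<or> p2 \<noteq> 0" and r: "r1 \<noteq> 0 \<or> r2 \<noteq> 0"
  and e: "x I1*p1 + x I3*p2 = 0" "x I2*p1 + x I0*p2 = 0" "r1*x I1 + r2*x I2 = 0" "r1*x I3 + r2*x I0 = 0"
  and e': "x' I1*p1 + x' I3*p2 = 0" "x' I2*p1 + x' I0*p2 = 0" "r1*x' I1 + r2*x' I2 = 0" "r1*x' I3 + r2*x' I0 = 0"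
  and nzx: "nz x"
  shows "par x x'"
proof -
  obtain l where l: "x I1 = l*r2*p2" "x I3 = -l*r2*p1" "x I2 = -l*r1*p2" "x I0 = l*r1*p1"
    using AL1[OF e p r] by blast
  obtain l' where l': "x' I1 = l'*r2*p2" "x' I3 = -l'*r2*p1" "x' I2 = -l'*r1*p2" "x' I0 = l'*r1*p1"
    using AL1[OF e' p r] by blast
  have "l \<noteq> 0" using nzx l by (auto simp: nz_def)
  then show ?thesis unfolding par_def
    by (intro exI[of _ "l'/l"]) (simp add: all_i4 l l')
qed

definition Tt :: "i4 \<Rightarrow> i4 \<Rightarrow> i4 \<Rightarrow> complex" where
 "Tt \<alpha> \<beta> \<gamma> = (if (\<alpha>,\<beta>,\<gamma>) \<in> {(I1,I2,I0),(I2,I3,I0),(I0,I0,I1),(I3,I1,I1),(I1,I1,I2),(I2,I0,I2),(I0,I3,I3),(I3,I2,I3)} then 1 else 0)"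

definition MX :: "(i4 \<Rightarrow> complex) \<Rightarrow> (i4 \<Rightarrow> complex) \<Rightarrow> i4 \<Rightarrow> complex" where
  "MX x y \<alpha> = sum4 (\<lambda>\<beta>. sum4 (\<lambda>\<gamma>. Tt \<alpha> \<beta> \<gamma> * x \<gamma> * y \<beta>))"
definition ZM :: "(i4 \<Rightarrow> complex) \<Rightarrow> (i4 \<Rightarrow> complex) \<Rightarrow> i4 \<Rightarrow> complex" where
  "ZM x z \<beta> = sum4 (\<lambda>\<alpha>. sum4 (\<lambda>\<gamma>. Tt \<alpha> \<beta> \<gamma> * x \<gamma> * z \<alpha>))"

lemma MX_simps: "MX x y I0 = x I1 * y I0 + x I3 * y I3" "MX x y I1 = x I2 * y I1 + x I0 * y I2"
  "MX x y I2 = x I2 * y I0 + x I0 * y I3" "MX x y I3 = x I1 * y I1 + x I3 * y I2"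
  by (simp_all add: MX_def sum4_def Tt_def)

lemma ZM_simps: "ZM x z I0 = z I0 * x I1 + z I2 * x I2" "ZM x z I1 = z I3 * x I1 + z I1 * x I2"
  "ZM x z I2 = z I3 * x I3 + z I1 * x I0" "ZM x z I3 = z I0 * x I3 + z I2 * x I0"
  by (simp_all add: ZM_def sum4_def Tt_def algebra_simps)

definition perm6 :: "nat \<Rightarrow> nat \<Rightarrow> nat \<Rightarrow> nat \<Rightarrow> nat \<Rightarrow> nat \<Rightarrow> bool" where
  "perm6 i j k l m n \<longleftrightarrow> i < 6 \<and> j < 6 \<and> k < 6 \<and> l < 6 \<and> m < 6 \<and> n < 6 \<and> distinct [i,j,k,l,m,n]"

lemma cover: assumes "perm6 i j k l m n" "\<rho> < 6"
  shows "\<rho> = i \<or> \<rho> = j \<or> \<rho> = k \<or> \<rho> = l \<or> \<rho> = m \<or> \<rho> = n"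
proof -
  have s: "set [i,j,k,l,m,n] \<subseteq> {..<6}" using assms by (auto simp: perm6_def)
  have d: "distinct [i,j,k,l,m,n]" using assms perm6_def by blast
  have "card (set [i,j,k,l,m,n]) = length [i,j,k,l,m,n]" by (rule distinct_card[OF d])
  then have "card (set [i,j,k,l,m,n]) = 6" by simp
  then have "set [i,j,k,l,m,n] = {..<6}" using s by (intro card_subset_eq) auto
  then show ?thesis using assms(2) by auto
qed

locale dec =
  fixes a b c :: "nat \<Rightarrow> i4 \<Rightarrow> complex"
  assumes dec: "\<And>\<alpha> \<beta> \<gamma>. Tt \<alpha> \<beta> \<gamma> = (\<Sum>\<rho><6. a \<rho> \<alpha> * b \<rho> \<beta> * c \<rho> \<gamma>)"
begin

lemma sum4_sum: "sum4 (\<lambda>t. \<Sum>\<rho>\<in>A. f \<rho> t) = (\<Sum>\<rho>\<in>A. sum4 (f \<rho>))"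
  by (simp add: sum4_def sum.distrib)

lemma MXdec: "MX x y \<alpha> = (\<Sum>\<rho><6. dot (c \<rho>) x * a \<rho> \<alpha> * dot (b \<rho>) y)"
proof -
  have "MX x y \<alpha> = sum4 (\<lambda>\<beta>. sum4 (\<lambda>\<gamma>. \<Sum>\<rho><6. a \<rho> \<alpha> * b \<rho> \<beta> * c \<rho> \<gamma> * x \<gamma> * y \<beta>))"
    unfolding MX_def dec by (simp add: sum_distrib_right)
  also have "\<dots> = (\<Sum>\<rho><6. sum4 (\<lambda>\<beta>. sum4 (\<lambda>\<gamma>. a \<rho> \<alpha> * b \<rho> \<beta> * c \<rho> \<gamma> * x \<gamma> * y \<beta>)))"
    by (simp add: sum4_sum)
  also have "\<dots> = (\<Sum>\<rho><6. dot (c \<rho>) x * a \<rho> \<alpha> * dot (b \<rho>) y)"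
    by (rule sum.cong) (simp_all add: dot_def sum4_def algebra_simps)
  finally show ?thesis .
qed

lemma ZMdec: "ZM x z \<beta> = (\<Sum>\<rho><6. dot (c \<rho>) x * dot (a \<rho>) z * b \<rho> \<beta>)"
proof -
  have "ZM x z \<beta> = sum4 (\<lambda>\<alpha>. sum4 (\<lambda>\<gamma>. \<Sum>\<rho><6. a \<rho> \<alpha> * b \<rho> \<beta> * c \<rho> \<gamma> * x \<gamma> * z \<alpha>))"
    unfolding ZM_def dec by (simp add: sum_distrib_right)
  also have "\<dots> = (\<Sum>\<rho><6. sum4 (\<lambda>\<alpha>. sum4 (\<lambda>\<gamma>. a \<rho> \<alpha> * b \<rho> \<beta> * c \<rho> \<gamma> * x \<gamma> * z \<alpha>)))"
    by (simp add: sum4_sum)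
  also have "\<dots> = (\<Sum>\<rho><6. dot (c \<rho>) x * dot (a \<rho>) z * b \<rho> \<beta>)"
    by (rule sum.cong) (simp_all add: dot_def sum4_def algebra_simps)
  finally show ?thesis .
qed

end


lemma par_comb': "(\<forall>t. b * x t + c * y t = 0) \<Longrightarrow> c \<noteq> 0 \<Longrightarrow> par x y"
  by (rule par_comb)

lemma indep_nz: assumes "indep3 v1 v2 v3" shows "nz v1"
proof (rule ccontr)
  assume "\<not> nz v1"
  then have "\<forall>t. v1 t = 0" by (auto simp: nz_def all_i4)
  then show False using indep3D[OF assms, of 1 0 0] by simp
qed

lemma span2:
  assumes "\<not> indep3 v x x'" "nz x" "\<not> par x x'"
  shows "\<exists>s s'. \<forall>t. v t = s * x t + s' * x' t"
proof -
  obtain \<alpha> \<beta> \<gamma> where comb: "\<forall>t. \<alpha> * v t + \<beta> * x t + \<gamma> * x' t = 0" and nt: "\<not> (\<alpha> = 0 \<and> \<beta> = 0 \<and> \<gamma> = 0)"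
    using assms(1) unfolding indep3_def by blast
  have "\<alpha> \<noteq> 0"
  proof
    assume a0: "\<alpha> = 0"
    then have c: "\<forall>t. \<beta> * x t + \<gamma> * x' t = 0" using comb by simp
    show False
    proof (cases "\<gamma> = 0")
      case True
      have "\<beta> = 0" using nz_comb[OF c True assms(2)] by simp
      with True a0 nt show False by simp
    next
      case False
      then show False using par_comb[OF c False] assms(3) by simp
    qed
  qed
  then have "\<forall>t. v t = (-\<beta>/\<alpha>) * x t + (-\<gamma>/\<alpha>) * x' t" using comb
    by (auto simp: field_simps eq_neg_iff_add_eq_0)
  then show ?thesis by blast
qed

context dec begin

definition K :: "nat \<Rightarrow> (i4 \<Rightarrow> complex) \<Rightarrow> bool" where "K \<rho> x \<longleftrightarrow> dot (c \<rho>) x = 0"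
definition TS :: "nat \<Rightarrow> nat \<Rightarrow> bool" where
  "TS i j \<longleftrightarrow> (\<forall>x y. K i x \<longrightarrow> K j x \<longrightarrow> K i y \<longrightarrow> K j y \<longrightarrow> bet x y = 0)"

lemma K_comb: "K \<rho> x \<Longrightarrow> K \<rho> y \<Longrightarrow> K \<rho> (\<lambda>t. \<alpha> * x t + \<beta> * y t)" by (simp add: K_def dot_comb)

lemma K_par: assumes "par x y" "K \<rho> x" shows "K \<rho> y"
proof -
  obtain \<mu> where "\<forall>t. y t = \<mu> * x t" using assms(1) par_def by blast
  then have "dot (c \<rho>) y = \<mu> * dot (c \<rho>) x" by (simp add: dot_def sum4_def algebra_simps)
  then show ?thesis using assms(2) by (simp add: K_def)
qed

lemma K_par': assumes "par x y" "nz y" "K \<rho> y" shows "K \<rho> x"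
proof -
  obtain \<mu> where m: "\<forall>t. y t = \<mu> * x t" using assms(1) par_def by blast
  then have "\<mu> \<noteq> 0" using assms(2) by (auto simp: nz_def)
  have "dot (c \<rho>) y = \<mu> * dot (c \<rho>) x" using m by (simp add: dot_def sum4_def algebra_simps)
  then show ?thesis using assms(3) \<open>\<mu> \<noteq> 0\<close> by (simp add: K_def)
qed

lemma K_from_comb: assumes "\<forall>t. \<alpha> * A t + \<beta> * B t + \<gamma> * C t = 0" "\<gamma> \<noteq> 0" "K \<rho> A" "K \<rho> B"
  shows "K \<rho> C"
proof -
  have "dot (c \<rho>) (\<lambda>t. \<alpha> * A t + \<beta> * B t + \<gamma> * C t) = 0" using assms(1) by (simp add: dot_def sum4_def)
  moreover have "dot (c \<rho>) (\<lambda>t. \<alpha> * A t + \<beta> * B t + \<gamma> * C t) = \<alpha> * dot (c \<rho>) A + \<beta> * dot (c \<rho>) B + \<gamma> * dot (c \<rho>) C"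
    by (simp add: dot_def sum4_def algebra_simps)
  ultimately show ?thesis using assms(2-4) by (simp add: K_def)
qed

lemma D1K: "\<exists>y. nz y \<and> K i y \<and> K j y \<and> K k y"
  using D1[of "c i" "c j" "c k"] by (auto simp: K_def)

lemma Mzero: assumes "\<And>\<rho>. \<rho> < 6 \<Longrightarrow> dot (c \<rho>) x = 0 \<or> dot (b \<rho>) y = 0" shows "MX x y \<alpha> = 0"
  unfolding MXdec by (rule sum.neutral) (use assms in auto)

lemma Zzero: assumes "\<And>\<rho>. \<rho> < 6 \<Longrightarrow> dot (c \<rho>) x = 0 \<or> dot (a \<rho>) z = 0" shows "ZM x z \<beta> = 0"
  unfolding ZMdec by (rule sum.neutral) (use assms in auto)

lemma kill3: assumes p: "perm6 i j k l m n"
  shows "\<exists>y z. nz y \<and> nz z \<and> (\<forall>x. K i x \<longrightarrow> K j x \<longrightarrow> K k x \<longrightarrow> (\<forall>t. MX x y t = 0 \<and> ZM x z t = 0))"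
proof -
  obtain y where y: "nz y" "dot (b l) y = 0" "dot (b m) y = 0" "dot (b n) y = 0" using D1 by blast
  obtain z where z: "nz z" "dot (a l) z = 0" "dot (a m) z = 0" "dot (a n) z = 0" using D1 by blast
  have "\<forall>x. K i x \<longrightarrow> K j x \<longrightarrow> K k x \<longrightarrow> (\<forall>t. MX x y t = 0 \<and> ZM x z t = 0)"
  proof (intro allI impI conjI)
    fix x t assume "K i x" "K j x" "K k x"
    then have h: "dot (c \<rho>) x = 0 \<or> (dot (b \<rho>) y = 0 \<and> dot (a \<rho>) z = 0)" if "\<rho> < 6" for \<rho>
      using cover[OF p that] y z by (auto simp: K_def)
    show "MX x y t = 0" by (rule Mzero) (use h in blast)
    show "ZM x z t = 0" by (rule Zzero) (use h in blast)
  qed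
  then show ?thesis using y(1) z(1) by blast
qed

lemma LB: assumes "perm6 i j k l m n" "K i x" "K j x" "K k x" shows "qf x = 0"
proof -
  obtain y z where y: "nz y" and h: "\<forall>x. K i x \<longrightarrow> K j x \<longrightarrow> K k x \<longrightarrow> (\<forall>t. MX x y t = 0 \<and> ZM x z t = 0)"
    using kill3[OF assms(1)] by blast
  have e: "MX x y t = 0" for t using h assms by blast
  have "qf x * y I0 = x I0 * MX x y I0 - x I3 * MX x y I2" "qf x * y I3 = x I1 * MX x y I2 - x I2 * MX x y I0"
       "qf x * y I1 = x I0 * MX x y I3 - x I3 * MX x y I1" "qf x * y I2 = x I1 * MX x y I1 - x I2 * MX x y I3"
    by (simp_all add: MX_simps qf_def algebra_simps)
  then show ?thesis using e y by (auto simp: nz_def)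
qed

lemma LA: assumes p: "perm6 i j k l m n" and x: "K i x" "K j x" "K k x" and x': "K i x'" "K j x'" "K k x'"
  and nzx: "nz x" shows "par x x'"
proof -
  obtain y z where y: "nz y" and z: "nz z" and h: "\<forall>x. K i x \<longrightarrow> K j x \<longrightarrow> K k x \<longrightarrow> (\<forall>t. MX x y t = 0 \<and> ZM x z t = 0)"
    using kill3[OF p] by blast
  have hx: "\<And>t. MX x y t = 0" "\<And>t. ZM x z t = 0" using h x by blast+
  have hx': "\<And>t. MX x' y t = 0" "\<And>t. ZM x' z t = 0" using h x' by blast+
  obtain p1 p2 where pp: "p1 \<noteq> 0 \<or> p2 \<noteq> 0"
    and pe: "\<And>w. (\<And>t. MX w y t = 0) \<Longrightarrow> w I1*p1 + w I3*p2 = 0 \<and> w I2*p1 + w I0*p2 = 0"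
  proof (cases "y I0 \<noteq> 0 \<or> y I3 \<noteq> 0")
    case True
    show ?thesis
    proof (rule that[of "y I0" "y I3"])
      show "y I0 \<noteq> 0 \<or> y I3 \<noteq> 0" using True .
      fix w assume "\<And>t. MX w y t = 0"
      then show "w I1 * y I0 + w I3 * y I3 = 0 \<and> w I2 * y I0 + w I0 * y I3 = 0"
        using MX_simps(1,3)[of w y] by simp
    qed
  next
    case False
    then have h: "y I1 \<noteq> 0 \<or> y I2 \<noteq> 0" using y by (auto simp: nz_def)
    show ?thesis
    proof (rule that[of "y I1" "y I2"])
      show "y I1 \<noteq> 0 \<or> y I2 \<noteq> 0" using h .
      fix w assume "\<And>t. MX w y t = 0"
      then show "w I1 * y I1 + w I3 * y I2 = 0 \<and> w I2 * y I1 + w I0 * y I2 = 0"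
        using MX_simps(4,2)[of w y] by simp
    qed
  qed
  obtain r1 r2 where rr: "r1 \<noteq> 0 \<or> r2 \<noteq> 0"
    and re: "\<And>w. (\<And>t. ZM w z t = 0) \<Longrightarrow> r1*w I1 + r2*w I2 = 0 \<and> r1*w I3 + r2*w I0 = 0"
  proof (cases "z I0 \<noteq> 0 \<or> z I2 \<noteq> 0")
    case True
    show ?thesis
    proof (rule that[of "z I0" "z I2"])
      show "z I0 \<noteq> 0 \<or> z I2 \<noteq> 0" using True .
      fix w assume "\<And>t. ZM w z t = 0"
      then show "z I0 * w I1 + z I2 * w I2 = 0 \<and> z I0 * w I3 + z I2 * w I0 = 0"
        using ZM_simps(1,4)[of w z] by simp
    qed
  next
    case False
    then have h: "z I3 \<noteq> 0 \<or> z I1 \<noteq> 0" using z by (auto simp: nz_def)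
    show ?thesis
    proof (rule that[of "z I3" "z I1"])
      show "z I3 \<noteq> 0 \<or> z I1 \<noteq> 0" using h .
      fix w assume "\<And>t. ZM w z t = 0"
      then show "z I3 * w I1 + z I1 * w I2 = 0 \<and> z I3 * w I3 + z I1 * w I0 = 0"
        using ZM_simps(2,3)[of w z] by simp
    qed
  qed
  show ?thesis
    using AL2[OF pp rr] pe[OF hx(1)] re[OF hx(2)] pe[OF hx'(1)] re[OF hx'(2)] nzx by blast
qed

end


context dec begin

lemma LC: assumes p: "perm6 i j k l m n" and x: "K i x" "K j x" "K k x" "K l x" "K m x"
  shows "\<not> nz x"
proof -
  define ee where "ee = (\<lambda>s::i4. \<lambda>t::i4. if t = s then (1::complex) else 0)"
  have dee: "dot (ee s) y = y s" for s y by (cases s) (simp_all add: ee_def dot_def sum4_def)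
  have h: "dot (c \<rho>) x = 0 \<or> dot (b \<rho>) y = 0" if "\<rho> < 6" "dot (b n) y = 0" for \<rho> y
    using cover[OF p that(1)] x that(2) by (auto simp: K_def)
  obtain y1 where y1: "nz y1" "dot (b n) y1 = 0" "dot (ee I2) y1 = 0" "dot (ee I3) y1 = 0" using D1 by blast
  obtain y2 where y2: "nz y2" "dot (b n) y2 = 0" "dot (ee I0) y2 = 0" "dot (ee I1) y2 = 0" using D1 by blast
  have m1: "MX x y1 t = 0" for t by (rule Mzero) (use h y1(2) in blast)
  have m2: "MX x y2 t = 0" for t by (rule Mzero) (use h y2(2) in blast)
  have z1: "y1 I2 = 0" "y1 I3 = 0" using y1 dee by simp_all
  have z2: "y2 I0 = 0" "y2 I1 = 0" using y2 dee by simp_all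
  have "y1 I0 \<noteq> 0 \<or> y1 I1 \<noteq> 0" using y1(1) z1 by (auto simp: nz_def)
  moreover have "x I1 * y1 I0 = 0" "x I2 * y1 I1 = 0" "x I2 * y1 I0 = 0" "x I1 * y1 I1 = 0"
    using m1[of I0] m1[of I1] m1[of I2] m1[of I3] z1 by (simp_all add: MX_simps)
  ultimately have x12: "x I1 = 0" "x I2 = 0" by auto
  have "y2 I2 \<noteq> 0 \<or> y2 I3 \<noteq> 0" using y2(1) z2 by (auto simp: nz_def)
  moreover have "x I3 * y2 I3 = 0" "x I0 * y2 I2 = 0" "x I0 * y2 I3 = 0" "x I3 * y2 I2 = 0"
    using m2[of I0] m2[of I1] m2[of I2] m2[of I3] z2 by (simp_all add: MX_simps)
  ultimately have "x I0 = 0" "x I3 = 0" by auto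
  with x12 show ?thesis by (simp add: nz_def)
qed

lemma pairdim: assumes p: "perm6 i j k l m n"
  and v: "K i v1" "K j v1" "K i v2" "K j v2" "K i v3" "K j v3"
  shows "\<not> indep3 v1 v2 v3"
proof
  assume ind: "indep3 v1 v2 v3"
  define f where "f = dot (c k)"
  have Kk: "K k w \<longleftrightarrow> f w = 0" for w by (simp add: K_def f_def)
  have fc: "f (\<lambda>t. \<alpha> * x t + \<beta> * y t) = \<alpha> * f x + \<beta> * f y" for \<alpha> \<beta> x y by (simp add: f_def dot_comb)
  show False
  proof (cases "f v1 = 0")
    case False
    define w1 where "w1 = (\<lambda>t. f v2 * v1 t + (- f v1) * v2 t)"
    define w2 where "w2 = (\<lambda>t. f v3 * v1 t + (- f v1) * v3 t)"
    have K1: "K i w1" "K j w1" "K k w1" unfolding w1_def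
      by (rule K_comb[OF v(1,3)], rule K_comb[OF v(2,4)], unfold Kk fc, simp add: algebra_simps)
    have K2: "K i w2" "K j w2" "K k w2" unfolding w2_def
      by (rule K_comb[OF v(1,5)], rule K_comb[OF v(2,6)], unfold Kk fc, simp add: algebra_simps)
    have "nz w1"
    proof (rule ccontr)
      assume "\<not> nz w1"
      then have "\<forall>t. f v2 * v1 t + (- f v1) * v2 t + 0 * v3 t = 0" by (auto simp: nz_def all_i4 w1_def)
      then show False using indep3D[OF ind, of "f v2" "- f v1" 0] False by simp
    qed
    then have "par w1 w2" using LA[OF p K1 K2] by blast
    then obtain \<mu> where "\<forall>t. w2 t = \<mu> * w1 t" unfolding par_def by blast
    then have "\<forall>t. (f v3 - \<mu> * f v2) * v1 t + (\<mu> * f v1) * v2 t + (- f v1) * v3 t = 0"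
      by (auto simp: w1_def w2_def algebra_simps)
    then show False using indep3D[OF ind, of "f v3 - \<mu> * f v2" "\<mu> * f v1" "- f v1"] False by simp
  next
    case f1: True
    show False
    proof (cases "f v2 = 0 \<and> f v3 = 0")
      case True
      have "nz v1" using indep_nz[OF ind] .
      have "par v1 v2" using LA[OF p v(1,2) _ v(3,4) _ \<open>nz v1\<close>] f1 True Kk by simp
      then obtain \<mu> where "\<forall>t. v2 t = \<mu> * v1 t" unfolding par_def by blast
      then have "\<forall>t. (- \<mu>) * v1 t + 1 * v2 t + 0 * v3 t = 0" by simp
      then show False using indep3D[OF ind, of "- \<mu>" 1 0] by simp
    next
      case False
      define w2 where "w2 = (\<lambda>t. f v3 * v2 t + (- f v2) * v3 t)"
      have K2: "K i w2" "K j w2" "K k w2" unfolding w2_def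
        by (rule K_comb[OF v(3,5)], rule K_comb[OF v(4,6)], unfold Kk fc, simp add: algebra_simps)
      have "nz v1" using indep_nz[OF ind] .
      have "par v1 w2" using LA[OF p v(1,2) _ K2] f1 Kk \<open>nz v1\<close> by blast
      then obtain \<mu> where "\<forall>t. w2 t = \<mu> * v1 t" unfolding par_def by blast
      then have "\<forall>t. (- \<mu>) * v1 t + f v3 * v2 t + (- f v2) * v3 t = 0" by (auto simp: w2_def algebra_simps)
      then show False using indep3D[OF ind, of "- \<mu>" "f v3" "- f v2"] False by simp
    qed
  qed
qed

lemma perm6_sym:
  "perm6 i j k l m n \<Longrightarrow> perm6 i j l k m n" "perm6 i j k l m n \<Longrightarrow> perm6 i j m k l n"
  "perm6 i j k l m n \<Longrightarrow> perm6 i k j m n l" "perm6 i j k l m n \<Longrightarrow> perm6 i j k l n m"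
  "perm6 i j k l m n \<Longrightarrow> perm6 i m n j k l" "perm6 i j k l m n \<Longrightarrow> perm6 i j k m n l"
  "perm6 i j k l m n \<Longrightarrow> perm6 i j m n k l" "perm6 i j k l m n \<Longrightarrow> perm6 i j n m k l"
  "perm6 i j k l m n \<Longrightarrow> perm6 i k l m n j" "perm6 i j k l m n \<Longrightarrow> perm6 i j k m l n"
  "perm6 i j k l m n \<Longrightarrow> perm6 i j l k n m" "perm6 i j k l m n \<Longrightarrow> perm6 i j l m n k"
  "perm6 i j k l m n \<Longrightarrow> perm6 i j l m k n"
  by (auto simp: perm6_def)

lemma LN: assumes p: "perm6 i j k l m n" and nts: "\<not> TS i j"
  and x: "K i x" "K j x" "K k x" "nz x"
  and x': "K i x'" "K j x'" "K l x'" "nz x'"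
  and x'': "K i x''" "K j x''" "K m x''" "nz x''"
  shows "par x x' \<or> par x x'' \<or> par x' x''"
proof (rule ccontr)
  assume np: "\<not> (par x x' \<or> par x x'' \<or> par x' x'')"
  have "\<not> indep3 x x' x''" by (rule pairdim[OF p]) (use x x' x'' in auto)
  then obtain \<alpha> \<beta> \<gamma> where comb: "\<forall>t. \<alpha> * x t + \<beta> * x' t + \<gamma> * x'' t = 0"
    and nt: "\<not> (\<alpha> = 0 \<and> \<beta> = 0 \<and> \<gamma> = 0)" unfolding indep3_def by blast
  have g: "\<gamma> \<noteq> 0"
  proof
    assume g0: "\<gamma> = 0"
    then have c: "\<forall>t. \<alpha> * x t + \<beta> * x' t = 0" using comb by simp
    show False
    proof (cases "\<beta> = 0")
      case True
      then have "\<alpha> = 0" using nz_comb[OF c True x(4)] by simp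
      with True g0 nt show False by simp
    next
      case False
      then show False using par_comb[OF c False] np by simp
    qed
  qed
  have al: "\<alpha> \<noteq> 0"
  proof
    assume "\<alpha> = 0"
    then have c: "\<forall>t. \<beta> * x' t + \<gamma> * x'' t = 0" using comb by simp
    show False using par_comb[OF c g] np by simp
  qed
  have be: "\<beta> \<noteq> 0"
  proof
    assume "\<beta> = 0"
    then have c: "\<forall>t. \<alpha> * x t + \<gamma> * x'' t = 0" using comb by simp
    show False using par_comb[OF c g] np by simp
  qed
  have q: "qf x = 0" by (rule LB[OF p x(1-3)])
  have q': "qf x' = 0" by (rule LB[OF perm6_sym(1)[OF p] x'(1-3)])
  have q'': "qf x'' = 0" by (rule LB[OF perm6_sym(2)[OF p] x''(1-3)])
  have e: "\<gamma> * x'' t = - (\<alpha> * x t) - \<beta> * x' t" for t using comb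
    by (metis add.commute add_diff_cancel_right' diff_0 diff_diff_eq)
  have "\<gamma> * \<gamma> * qf x'' = (\<gamma> * x'' I0) * (\<gamma> * x'' I1) - (\<gamma> * x'' I2) * (\<gamma> * x'' I3)"
    by (simp add: qf_def algebra_simps)
  also have "\<dots> = (- (\<alpha> * x I0) - \<beta> * x' I0) * (- (\<alpha> * x I1) - \<beta> * x' I1) - (- (\<alpha> * x I2) - \<beta> * x' I2) * (- (\<alpha> * x I3) - \<beta> * x' I3)"
    by (simp only: e)
  also have "\<dots> = \<alpha> * \<alpha> * qf x + \<beta> * \<beta> * qf x' + \<alpha> * \<beta> * bet x x'"
    by (simp add: qf_def bet_def algebra_simps)
  finally have "\<alpha> * \<beta> * bet x x' = 0" using q q' q'' by simp
  then have bxx: "bet x x' = 0" using al be by simp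
  have "TS i j"
    unfolding TS_def
  proof (intro allI impI)
    fix v w assume v: "K i v" "K j v" and w: "K i w" "K j w"
    have "\<not> indep3 v x x'" by (rule pairdim[OF p]) (use v x x' in auto)
    then obtain s s' where sv: "\<forall>t. v t = s * x t + s' * x' t" using span2 x(4) np by blast
    have "\<not> indep3 w x x'" by (rule pairdim[OF p]) (use w x x' in auto)
    then obtain u u' where uw: "\<forall>t. w t = u * x t + u' * x' t" using span2 x(4) np by blast
    have "bet v w = 2*s*u*qf x + (s*u' + s'*u) * bet x x' + 2*s'*u'*qf x'"
      by (simp add: bet_def qf_def sv uw algebra_simps)
    then show "bet v w = 0" using q q' bxx by simp
  qed
  with nts show False by simp
qed

end


context dec begin

lemma CoreTS: assumes p: "perm6 i j k l m n"
  and s1: "nz s1" "K i s1" "K j s1" "K k s1" "K l s1"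
  and s2: "nz s2" "K i s2" "K j s2" "K m s2" "K n s2"
  shows "TS i k"
proof (rule ccontr)
  assume nts: "\<not> TS i k"
  obtain P1 where P1: "nz P1" "K i P1" "K k P1" "K m P1" using D1K by blast
  obtain P2 where P2: "nz P2" "K i P2" "K k P2" "K n P2" using D1K by blast
  have "par s1 P1 \<or> par s1 P2 \<or> par P1 P2"
    by (rule LN[OF perm6_sym(3)[OF p] nts]) (use s1 P1 P2 in auto)
  then show False
  proof (elim disjE)
    assume "par s1 P1"
    then have "K m s1" using K_par' P1 by blast
    then show False using LC[OF p s1(2-5)] s1(1) by blast
  next
    assume "par s1 P2"
    then have "K n s1" using K_par' P2 by blast
    then show False using LC[OF perm6_sym(4)[OF p] s1(2-5)] s1(1) by blast
  next
    assume "par P1 P2"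
    then have "K n P1" using K_par' P2 by blast
    have "par s2 P1" by (rule LA[OF perm6_sym(5)[OF p]]) (use s2 P1 \<open>K n P1\<close> in auto)
    then have "K k s2" using K_par' P1 by blast
    then show False using LC[OF perm6_sym(6)[OF p] s2(2,3) _ s2(4,5)] s2(1) by blast
  qed
qed

lemma HP: assumes p: "perm6 i j k l m n" and ts: "TS i j" "TS i k" "TS i l"
  shows "\<exists>q. nz q \<and> K i q \<and> K j q \<and> K k q \<and> K l q"
proof -
  obtain A where A: "nz A" "K i A" "K j A" "K k A" using D1K by blast
  obtain B where B: "nz B" "K i B" "K j B" "K l B" using D1K by blast
  obtain C where C: "nz C" "K i C" "K k C" "K l C" using D1K by blast
  have "\<not> indep3 A B C"
  proof
    assume ind: "indep3 A B C"
    show False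
    proof (rule LemI[OF ind])
      show "bet A A = 0" using ts(1) A unfolding TS_def by blast
      show "bet B B = 0" using ts(1) B unfolding TS_def by blast
      show "bet C C = 0" using ts(2) C unfolding TS_def by blast
      show "bet A B = 0" using ts(1) A B unfolding TS_def by blast
      show "bet A C = 0" using ts(2) A C unfolding TS_def by blast
      show "bet B C = 0" using ts(3) B C unfolding TS_def by blast
    qed
  qed
  then obtain \<alpha> \<beta> \<gamma> where comb: "\<forall>t. \<alpha> * A t + \<beta> * B t + \<gamma> * C t = 0"
    and nt: "\<not> (\<alpha> = 0 \<and> \<beta> = 0 \<and> \<gamma> = 0)" unfolding indep3_def by blast
  show ?thesis
  proof (cases "\<gamma> = 0")
    case False
    have "K j C" by (rule K_from_comb[OF comb False A(3) B(3)])
    then show ?thesis using C by blast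
  next
    case True
    then have c: "\<forall>t. \<alpha> * A t + \<beta> * B t = 0" using comb by simp
    show ?thesis
    proof (cases "\<beta> = 0")
      case True
      then have "\<alpha> = 0" using nz_comb[OF c True A(1)] by simp
      with True \<open>\<gamma> = 0\<close> nt show ?thesis by simp
    next
      case False
      have "par A B" by (rule par_comb[OF c False])
      then have "K k B" using K_par A by blast
      then show ?thesis using B by blast
    qed
  qed
qed

lemma LH: assumes p: "perm6 i j k l m n" and ts: "TS i j" "TS i k" "TS i l" "TS i m"
  shows False
proof -
  obtain p1 where p1: "nz p1" "K i p1" "K j p1" "K k p1" "K l p1" using HP[OF p ts(1-3)] by blast
  obtain p2 where p2: "nz p2" "K i p2" "K j p2" "K k p2" "K m p2" using HP[OF perm6_sym(10)[OF p] ts(1,2,4)] by blast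
  have "par p1 p2" by (rule LA[OF p]) (use p1 p2 in auto)
  then have "K m p1" using K_par' p2 by blast
  then show False using LC[OF p p1(2-5)] p1(1) by blast
qed

lemma Core: assumes p: "perm6 i j k l m n"
  and s1: "nz s1" "K i s1" "K j s1" "K k s1" "K l s1"
  and s2: "nz s2" "K i s2" "K j s2" "K m s2" "K n s2"
  shows False
proof -
  have "TS i k" by (rule CoreTS[OF p s1 s2])
  moreover have "TS i l" by (rule CoreTS[OF perm6_sym(1)[OF p]]) (use s1 s2 in auto)
  moreover have "TS i m" by (rule CoreTS[OF perm6_sym(7)[OF p]]) (use s1 s2 in auto)
  moreover have "TS i n" by (rule CoreTS[OF perm6_sym(8)[OF p]]) (use s1 s2 in auto)
  ultimately show False using LH[OF perm6_sym(9)[OF p]] by blast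
qed

lemma Split: assumes p: "perm6 i j k l m n" and nts: "\<not> TS i j" shows False
proof -
  obtain Pk where Pk: "nz Pk" "K i Pk" "K j Pk" "K k Pk" using D1K by blast
  obtain Pl where Pl: "nz Pl" "K i Pl" "K j Pl" "K l Pl" using D1K by blast
  obtain Pm where Pm: "nz Pm" "K i Pm" "K j Pm" "K m Pm" using D1K by blast
  obtain Pn where Pn: "nz Pn" "K i Pn" "K j Pn" "K n Pn" using D1K by blast
  have "par Pk Pl \<or> par Pk Pm \<or> par Pl Pm"
    by (rule LN[OF p nts]) (use Pk Pl Pm in auto)
  then show False
  proof (elim disjE)
    assume "par Pk Pl"
    then have kl: "K l Pk" using K_par' Pl by blast
    have "par Pk Pm \<or> par Pk Pn \<or> par Pm Pn"
      by (rule LN[OF perm6_sym(6)[OF p] nts]) (use Pk Pm Pn in auto)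
    then show False
    proof (elim disjE)
      assume "par Pk Pm"
      then have "K m Pk" using K_par' Pm by blast
      then show False using LC[OF p Pk(2-4) kl] Pk(1) by blast
    next
      assume "par Pk Pn"
      then have "K n Pk" using K_par' Pn by blast
      then show False using LC[OF perm6_sym(4)[OF p] Pk(2-4) kl] Pk(1) by blast
    next
      assume "par Pm Pn"
      then have "K n Pm" using K_par' Pn by blast
      then show False using Core[OF p Pk(1-4) kl Pm] by blast
    qed
  next
    assume "par Pk Pm"
    then have km: "K m Pk" using K_par' Pm by blast
    have "par Pk Pl \<or> par Pk Pn \<or> par Pl Pn"
      by (rule LN[OF perm6_sym(4)[OF p] nts]) (use Pk Pl Pn in auto)
    then show False
    proof (elim disjE)
      assume "par Pk Pl"
      then have "K l Pk" using K_par' Pl by blast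
      then show False using LC[OF p Pk(2-4) _ km] Pk(1) by blast
    next
      assume "par Pk Pn"
      then have "K n Pk" using K_par' Pn by blast
      then show False using LC[OF perm6_sym(6)[OF p] Pk(2-4) km] Pk(1) by blast
    next
      assume "par Pl Pn"
      then have "K n Pl" using K_par' Pn by blast
      then show False using Core[OF perm6_sym(10)[OF p] Pk(1-4) km Pl] by blast
    qed
  next
    assume "par Pl Pm"
    then have lm: "K m Pl" using K_par' Pm by blast
    have "par Pl Pk \<or> par Pl Pn \<or> par Pk Pn"
      by (rule LN[OF perm6_sym(11)[OF p] nts]) (use Pk Pl Pn in auto)
    then show False
    proof (elim disjE)
      assume "par Pl Pk"
      then have "K k Pl" using K_par' Pk by blast
      then show False using LC[OF p Pl(2,3) _ Pl(4) lm] Pl(1) by blast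
    next
      assume "par Pl Pn"
      then have "K n Pl" using K_par' Pn by blast
      then show False using LC[OF perm6_sym(12)[OF p] Pl(2-4) lm] Pl(1) by blast
    next
      assume "par Pk Pn"
      then have "K n Pk" using K_par' Pn by blast
      then show False using Core[OF perm6_sym(13)[OF p] Pl(1-4) lm Pk] by blast
    qed
  qed
qed

theorem contradiction: False
proof (cases "TS 0 1 \<and> TS 0 2 \<and> TS 0 3 \<and> TS 0 4")
  case True
  then show False using LH[of 0 1 2 3 4 5] by (simp add: perm6_def)
next
  case False
  then show False
    using Split[of 0 1 2 3 4 5] Split[of 0 2 1 3 4 5] Split[of 0 3 1 2 4 5] Split[of 0 4 1 2 3 5]
    by (auto simp: perm6_def)
qed

end


lemma kron_dims[simp]: "dim_row (kron A B) = dim_row A * dim_row B" "dim_col (kron A B) = dim_col A * dim_col B"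
  unfolding kron_def by simp_all
lemma kron3_dims[simp]: "dim_row (kron3 A B C) = dim_row A * dim_row B * dim_row C"
  "dim_col (kron3 A B C) = dim_col A * dim_col B * dim_col C"
  by (simp_all add: kron3_def)
lemma kron_idx: "i < dim_row A * dim_row B \<Longrightarrow> j < dim_col A * dim_col B \<Longrightarrow>
  kron A B $$ (i,j) = A $$ (i div dim_row B, j div dim_col B) * B $$ (i mod dim_row B, j mod dim_col B)"
  unfolding kron_def by simp
lemma kron3_idx:
  assumes "A \<in> carrier_mat 2 2" "B \<in> carrier_mat 2 2" "C \<in> carrier_mat 2 2" "i < 8" "j < 8"
  shows "kron3 A B C $$ (i,j) = A $$ (i div 4, j div 4) * B $$ ((i div 2) mod 2, (j div 2) mod 2) * C $$ (i mod 2, j mod 2)"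
proof -
  have d: "dim_row A = 2" "dim_col A = 2" "dim_row B = 2" "dim_col B = 2" "dim_row C = 2" "dim_col C = 2"
    using assms by auto
  have i2: "i div 2 < 4" "j div 2 < 4" using assms by auto
  have i4: "i div 2 div 2 = i div 4" "j div 2 div 2 = j div 4" by (simp_all add: div_mult2_eq[symmetric])
  have "kron3 A B C $$ (i,j) = kron A B $$ (i div 2, j div 2) * C $$ (i mod 2, j mod 2)"
    unfolding kron3_def using assms(4,5) d by (subst kron_idx) simp_all
  also have "kron A B $$ (i div 2, j div 2) = A $$ (i div 4, j div 4) * B $$ ((i div 2) mod 2, (j div 2) mod 2)"
    using i2 d by (subst kron_idx) (simp_all add: i4)
  finally show ?thesis .
qed

definition sig :: "nat \<Rightarrow> nat" where "sig i = [1,6,4,3,7,0,2,5] ! i"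

lemma S_dims[simp]: "dim_row S0 = 2" "dim_col S0 = 2" "dim_row S1 = 2" "dim_col S1 = 2"
   "dim_row S2 = 2" "dim_col S2 = 2" "dim_row S3 = 2" "dim_col S3 = 2"
  unfolding S0_def S1_def S2_def S3_def mat_of_rows_list_def by simp_all

lemma S_carrier: "S0 \<in> carrier_mat 2 2" "S1 \<in> carrier_mat 2 2" "S2 \<in> carrier_mat 2 2" "S3 \<in> carrier_mat 2 2"
  by (rule carrier_matI; simp)+

lemma less8: "(i::nat) < 8 \<longleftrightarrow> i = 0 \<or> i = 1 \<or> i = 2 \<or> i = 3 \<or> i = 4 \<or> i = 5 \<or> i = 6 \<or> i = 7" by (simp add: eval_nat_numeral less_Suc_eq)

lemma S_num:
  "S0 $$ (0,0) = 1" "S0 $$ (0,1) = 0" "S0 $$ (1,0) = 0" "S0 $$ (1,1) = 0"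
  "S1 $$ (0,0) = 0" "S1 $$ (0,1) = 1" "S1 $$ (1,0) = 0" "S1 $$ (1,1) = 0"
  "S2 $$ (0,0) = 0" "S2 $$ (0,1) = 0" "S2 $$ (1,0) = 1" "S2 $$ (1,1) = 0"
  "S3 $$ (0,0) = 0" "S3 $$ (0,1) = 0" "S3 $$ (1,0) = 0" "S3 $$ (1,1) = 1"
  unfolding S0_def S1_def S2_def S3_def mat_of_rows_list_def by simp_all

lemma less2: "(i::nat) < 2 \<longleftrightarrow> i = 0 \<or> i = 1" by auto
lemma S_idx: "i < 2 \<Longrightarrow> j < 2 \<Longrightarrow> S0 $$ (i,j) = (if i = 0 \<and> j = 0 then 1 else 0)"
  "i < 2 \<Longrightarrow> j < 2 \<Longrightarrow> S1 $$ (i,j) = (if i = 0 \<and> j = 1 then 1 else 0)"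
  "i < 2 \<Longrightarrow> j < 2 \<Longrightarrow> S2 $$ (i,j) = (if i = 1 \<and> j = 0 then 1 else 0)"
  "i < 2 \<Longrightarrow> j < 2 \<Longrightarrow> S3 $$ (i,j) = (if i = 1 \<and> j = 1 then 1 else 0)"
  unfolding S0_def S1_def S2_def S3_def mat_of_rows_list_def by (auto simp: less2)

lemma kron3_mat: "A \<in> carrier_mat 2 2 \<Longrightarrow> B \<in> carrier_mat 2 2 \<Longrightarrow> C \<in> carrier_mat 2 2 \<Longrightarrow>
  kron3 A B C = mat 8 8 (\<lambda>(i,j). A $$ (i div 4, j div 4) * B $$ ((i div 2) mod 2, (j div 2) mod 2) * C $$ (i mod 2, j mod 2))"
proof -
  assume a: "A \<in> carrier_mat 2 2" "B \<in> carrier_mat 2 2" "C \<in> carrier_mat 2 2"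
  then have d: "dim_row A = 2" "dim_col A = 2" "dim_row B = 2" "dim_col B = 2" "dim_row C = 2" "dim_col C = 2"
    by auto
  show ?thesis by (rule eq_matI) (simp_all add: kron3_idx[OF a] d)
qed

lemma madd: "mat n m f + mat n m g = mat n m (\<lambda>x. f x + g x)"
  by (rule eq_matI) auto

lemma U7_idx: assumes "i < 8" "j < 8" shows "U7 $$ (i,j) = (if j = sig i then 1 else 0)"
proof -
  have "U7 $$ (i,j) =
   S1 $$ (i div 4, j div 4) * S2 $$ ((i div 2) mod 2, (j div 2) mod 2) * S0 $$ (i mod 2, j mod 2)
 + S2 $$ (i div 4, j div 4) * S3 $$ ((i div 2) mod 2, (j div 2) mod 2) * S0 $$ (i mod 2, j mod 2)
 + S0 $$ (i div 4, j div 4) * S0 $$ ((i div 2) mod 2, (j div 2) mod 2) * S1 $$ (i mod 2, j mod 2)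
 + S3 $$ (i div 4, j div 4) * S1 $$ ((i div 2) mod 2, (j div 2) mod 2) * S1 $$ (i mod 2, j mod 2)
 + S1 $$ (i div 4, j div 4) * S1 $$ ((i div 2) mod 2, (j div 2) mod 2) * S2 $$ (i mod 2, j mod 2)
 + S2 $$ (i div 4, j div 4) * S0 $$ ((i div 2) mod 2, (j div 2) mod 2) * S2 $$ (i mod 2, j mod 2)
 + S0 $$ (i div 4, j div 4) * S3 $$ ((i div 2) mod 2, (j div 2) mod 2) * S3 $$ (i mod 2, j mod 2)
 + S3 $$ (i div 4, j div 4) * S2 $$ ((i div 2) mod 2, (j div 2) mod 2) * S3 $$ (i mod 2, j mod 2)"
    unfolding U7_def by (simp only: kron3_mat S_carrier madd index_mat assms case_prod_conv)
  also have "\<dots> = (if j = sig i then 1 else 0)"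
    using assms by (simp only: less8) (elim disjE; simp add: S_idx sig_def)
  finally show ?thesis .
qed


lemma U7_dims: "dim_row U7 = 8" "dim_col U7 = 8" by (simp_all add: U7_def)

lemma U7_carrier: "U7 \<in> carrier_mat 8 8" by (rule carrier_matI) (simp_all add: U7_dims)

lemma s8: "(\<Sum>k\<in>{0..<8::nat}. f k) = f 0 + f 1 + f 2 + f 3 + f 4 + f 5 + f 6 + (f 7 :: complex)"
  by (simp add: eval_nat_numeral atLeast0LessThan)

lemma U7_unitary: "unitary_mat U7"
proof -
  have adj_idx: "adj U7 $$ (k,j) = cnj (U7 $$ (j,k))" if "k < 8" "j < 8" for k j
    using that by (simp add: adj_def U7_dims)
  have adj_dims: "dim_row (adj U7) = 8" "dim_col (adj U7) = 8" by (simp_all add: adj_def U7_dims)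
  have 1: "U7 * adj U7 = 1\<^sub>m 8"
  proof (rule eq_matI)
    fix i j assume "i < dim_row (1\<^sub>m 8 :: complex mat)" "j < dim_col (1\<^sub>m 8 :: complex mat)"
    then have ij: "i < 8" "j < 8" by auto
    have "(U7 * adj U7) $$ (i,j) = (\<Sum>k\<in>{0..<8}. U7 $$ (i,k) * adj U7 $$ (k,j))"
      using ij by (simp add: U7_dims adj_dims scalar_prod_def)
    also have "\<dots> = (\<Sum>k\<in>{0..<8}. (if k = sig i then 1 else 0) * cnj (if k = sig j then 1 else 0))"
      using ij by (intro sum.cong) (auto simp: U7_idx adj_idx)
    also have "\<dots> = (if i = j then 1 else 0)"
      using ij unfolding s8 by (simp only: less8) (elim disjE; simp add: sig_def)
    also have "\<dots> = 1\<^sub>m 8 $$ (i,j)" using ij by simp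
    finally show "(U7 * adj U7) $$ (i,j) = 1\<^sub>m 8 $$ (i,j)" .
  qed (simp_all add: U7_dims adj_dims)
  have 2: "adj U7 * U7 = 1\<^sub>m 8"
  proof (rule eq_matI)
    fix i j assume "i < dim_row (1\<^sub>m 8 :: complex mat)" "j < dim_col (1\<^sub>m 8 :: complex mat)"
    then have ij: "i < 8" "j < 8" by auto
    have "(adj U7 * U7) $$ (i,j) = (\<Sum>k\<in>{0..<8}. adj U7 $$ (i,k) * U7 $$ (k,j))"
      using ij by (simp add: U7_dims adj_dims scalar_prod_def)
    also have "\<dots> = (\<Sum>k\<in>{0..<8}. cnj (if i = sig k then 1 else 0) * (if j = sig k then 1 else 0))"
      using ij by (intro sum.cong) (auto simp: U7_idx adj_idx)
    also have "\<dots> = (if i = j then 1 else 0)"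
      using ij unfolding s8 by (simp only: less8) (elim disjE; simp add: sig_def)
    also have "\<dots> = 1\<^sub>m 8 $$ (i,j)" using ij by simp
    finally show "(adj U7 * U7) $$ (i,j) = 1\<^sub>m 8 $$ (i,j)" .
  qed (simp_all add: U7_dims adj_dims)
  show ?thesis unfolding unitary_mat_def using 1 2 U7_carrier by (simp add: U7_dims)
qed

lemma foldr_msum:
  assumes "\<forall>\<rho>\<in>set xs. F \<rho> \<in> carrier_mat 8 8"
  shows "foldr (\<lambda>j acc. F j + acc) xs (0\<^sub>m 8 8) \<in> carrier_mat 8 8 \<and>
    (\<forall>i<8. \<forall>j<8. foldr (\<lambda>j acc. F j + acc) xs (0\<^sub>m 8 8) $$ (i,j) = sum_list (map (\<lambda>\<rho>. F \<rho> $$ (i,j)) xs))"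
  using assms
proof (induction xs)
  case Nil
  then show ?case by simp
next
  case (Cons x xs)
  then have IH: "foldr (\<lambda>j acc. F j + acc) xs (0\<^sub>m 8 8) \<in> carrier_mat 8 8"
    "\<forall>i<8. \<forall>j<8. foldr (\<lambda>j acc. F j + acc) xs (0\<^sub>m 8 8) $$ (i,j) = sum_list (map (\<lambda>\<rho>. F \<rho> $$ (i,j)) xs)"
    and Fx: "F x \<in> carrier_mat 8 8" by auto
  show ?case using IH Fx by (auto simp: index_add_mat)
qed

lemma msum_idx:
  assumes "\<forall>\<rho><r. F \<rho> \<in> carrier_mat 8 8" "i < 8" "j < 8"
  shows "msum 8 8 F r $$ (i,j) = (\<Sum>\<rho><r. F \<rho> $$ (i,j))"
proof -
  have "\<forall>\<rho>\<in>set [0..<r]. F \<rho> \<in> carrier_mat 8 8" using assms(1) by auto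
  from foldr_msum[OF this] assms(2,3)
  have "msum 8 8 F r $$ (i,j) = sum_list (map (\<lambda>\<rho>. F \<rho> $$ (i,j)) [0..<r])"
    unfolding msum_def by blast
  also have "\<dots> = (\<Sum>\<rho><r. F \<rho> $$ (i,j))"
    by (simp add: sum_list_sum_nth atLeast0LessThan)
  finally show ?thesis .
qed

lemma msum_carrier:
  assumes "\<forall>\<rho><r. F \<rho> \<in> carrier_mat 8 8"
  shows "msum 8 8 F r \<in> carrier_mat 8 8"
proof -
  have "\<forall>\<rho>\<in>set [0..<r]. F \<rho> \<in> carrier_mat 8 8" using assms(1) by auto
  from foldr_msum[OF this] show ?thesis unfolding msum_def by blast
qed


lemma kron3_carrier: "A \<in> carrier_mat 2 2 \<Longrightarrow> B \<in> carrier_mat 2 2 \<Longrightarrow> C \<in> carrier_mat 2 2 \<Longrightarrow> kron3 A B C \<in> carrier_mat 8 8"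
  by (rule carrier_matI) auto

definition m2 :: "complex list \<Rightarrow> complex mat" where "m2 v = mat_of_rows_list 2 [[v!0, v!1],[v!2,v!3]]"

lemma m2_carrier: "m2 v \<in> carrier_mat 2 2"
  unfolding m2_def mat_of_rows_list_def by (rule carrier_matI) simp_all

lemma m2_idx: "r < 2 \<Longrightarrow> c < 2 \<Longrightarrow> m2 v $$ (r,c) = v ! (2*r+c)"
  unfolding m2_def mat_of_rows_list_def by (auto simp: less2)

definition As :: "complex list list" where
  "As = [[1,1,0,0],[0,1,1,0],[1,0,0,0],[0,1,0,0],[1,0,0,1],[-1,0,1,0],[0,-1,0,1]]"
definition Bs :: "complex list list" where
  "Bs = [[1,0,1,0],[1,0,0,0],[0,0,-1,1],[-1,1,0,0],[0,0,1,0],[1,0,0,1],[0,1,1,0]]"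
definition Cs :: "complex list list" where
  "Cs = [[1,1,0,0],[-1,0,1,0],[1,0,0,1],[0,1,1,0],[0,-1,0,1],[1,0,0,0],[0,1,0,0]]"

lemma s7: "(\<Sum>\<rho><7::nat. f \<rho>) = f 0 + f 1 + f 2 + f 3 + f 4 + f 5 + (f 6 :: complex)"
  by (simp add: eval_nat_numeral)

lemma upper: "is_sr_decomp U7 7"
proof -
  define FA where "FA = (\<lambda>\<rho>. m2 (As ! \<rho>))"
  define FB where "FB = (\<lambda>\<rho>. m2 (Bs ! \<rho>))"
  define FC where "FC = (\<lambda>\<rho>. m2 (Cs ! \<rho>))"
  have car: "\<forall>\<rho><7. kron3 (FA \<rho>) (FB \<rho>) (FC \<rho>) \<in> carrier_mat 8 8"
    by (simp add: FA_def FB_def FC_def kron3_carrier m2_carrier)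
  have "U7 = msum 8 8 (\<lambda>j. kron3 (FA j) (FB j) (FC j)) 7"
  proof (rule eq_matI)
    fix i j assume "i < dim_row (msum 8 8 (\<lambda>j. kron3 (FA j) (FB j) (FC j)) 7)"
      "j < dim_col (msum 8 8 (\<lambda>j. kron3 (FA j) (FB j) (FC j)) 7)"
    then have ij: "i < 8" "j < 8" using msum_carrier[OF car] by auto
    have d: "i div 4 < 2" "j div 4 < 2" "(i div 2) mod 2 < 2" "(j div 2) mod 2 < 2" "i mod 2 < 2" "j mod 2 < 2"
      using ij by auto
    have e: "kron3 (FA \<rho>) (FB \<rho>) (FC \<rho>) $$ (i,j) = As!\<rho>!(2*(i div 4)+j div 4) * Bs!\<rho>!(2*((i div 2) mod 2) + (j div 2) mod 2) * Cs!\<rho>!(2*(i mod 2) + j mod 2)" for \<rho>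
      unfolding FA_def FB_def FC_def using ij d by (simp add: kron3_idx m2_carrier m2_idx)
    have "msum 8 8 (\<lambda>j. kron3 (FA j) (FB j) (FC j)) 7 $$ (i,j) = (\<Sum>\<rho><7. As!\<rho>!(2*(i div 4)+j div 4) * Bs!\<rho>!(2*((i div 2) mod 2) + (j div 2) mod 2) * Cs!\<rho>!(2*(i mod 2) + j mod 2))"
      using msum_idx[OF car ij] e by simp
    also have "\<dots> = U7 $$ (i,j)"
      using ij unfolding s7 by (simp only: less8) (elim disjE; simp add: U7_idx sig_def As_def Bs_def Cs_def)
    finally show "U7 $$ (i,j) = msum 8 8 (\<lambda>j. kron3 (FA j) (FB j) (FC j)) 7 $$ (i,j)" by simp
  qed (use msum_carrier[OF car] U7_dims in auto)
  moreover have "\<forall>j<7. FA j \<in> carrier_mat 2 2 \<and> FB j \<in> carrier_mat 2 2 \<and> FC j \<in> carrier_mat 2 2"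
    by (simp add: FA_def FB_def FC_def m2_carrier)
  ultimately show ?thesis unfolding is_sr_decomp_def by blast
qed


lemma lower: assumes "is_sr_decomp U7 r" shows "7 \<le> r"
proof (rule ccontr)
  assume "\<not> 7 \<le> r"
  then have r6: "r \<le> 6" by simp
  obtain A B C where car: "\<forall>j<r. A j \<in> carrier_mat 2 2 \<and> B j \<in> carrier_mat 2 2 \<and> C j \<in> carrier_mat 2 2"
    and U: "U7 = msum 8 8 (\<lambda>j. kron3 (A j) (B j) (C j)) r"
    using assms unfolding is_sr_decomp_def by blast
  have kc: "\<forall>\<rho><r. kron3 (A \<rho>) (B \<rho>) (C \<rho>) \<in> carrier_mat 8 8" using car kron3_carrier by blast
  define a where "a = (\<lambda>\<rho> t. if \<rho> < r then A \<rho> $$ (i2n t div 2, i2n t mod 2) else 0)"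
  define b where "b = (\<lambda>\<rho> t. if \<rho> < r then B \<rho> $$ (i2n t div 2, i2n t mod 2) else 0)"
  define c where "c = (\<lambda>\<rho> t. if \<rho> < r then C \<rho> $$ (i2n t div 2, i2n t mod 2) else 0)"
  interpret d: dec a b c
  proof
    fix \<alpha> \<beta> \<gamma>
    define I where "I = 4 * (i2n \<alpha> div 2) + 2 * (i2n \<beta> div 2) + i2n \<gamma> div 2"
    define J where "J = 4 * (i2n \<alpha> mod 2) + 2 * (i2n \<beta> mod 2) + i2n \<gamma> mod 2"
    have IJ: "I < 8" "J < 8" "I div 4 = i2n \<alpha> div 2" "J div 4 = i2n \<alpha> mod 2"
      "(I div 2) mod 2 = i2n \<beta> div 2" "(J div 2) mod 2 = i2n \<beta> mod 2"
      "I mod 2 = i2n \<gamma> div 2" "J mod 2 = i2n \<gamma> mod 2"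
      unfolding I_def J_def by (cases \<alpha>; cases \<beta>; cases \<gamma>; simp add: i2n_def)+
    have "Tt \<alpha> \<beta> \<gamma> = U7 $$ (I,J)"
      unfolding I_def J_def
      by (cases \<alpha>; cases \<beta>; cases \<gamma>; simp add: i2n_def U7_idx sig_def Tt_def)
    also have "\<dots> = (\<Sum>\<rho><r. kron3 (A \<rho>) (B \<rho>) (C \<rho>) $$ (I,J))"
      using msum_idx[OF kc IJ(1,2)] U by simp
    also have "\<dots> = (\<Sum>\<rho><r. A \<rho> $$ (i2n \<alpha> div 2, i2n \<alpha> mod 2) * B \<rho> $$ (i2n \<beta> div 2, i2n \<beta> mod 2) * C \<rho> $$ (i2n \<gamma> div 2, i2n \<gamma> mod 2))"
      by (rule sum.cong) (use car IJ in \<open>auto simp: kron3_idx\<close>)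
    also have "\<dots> = (\<Sum>\<rho><6. if \<rho> < r then A \<rho> $$ (i2n \<alpha> div 2, i2n \<alpha> mod 2) * B \<rho> $$ (i2n \<beta> div 2, i2n \<beta> mod 2) * C \<rho> $$ (i2n \<gamma> div 2, i2n \<gamma> mod 2) else 0)"
    proof -
      have "{..<6} \<inter> {x. x < r} = {..<r}" using r6 by auto
      then show ?thesis by (simp add: sum.If_cases)
    qed
    also have "\<dots> = (\<Sum>\<rho><6. a \<rho> \<alpha> * b \<rho> \<beta> * c \<rho> \<gamma>)"
      by (rule sum.cong) (auto simp: a_def b_def c_def)
    finally show "Tt \<alpha> \<beta> \<gamma> = (\<Sum>\<rho><6. a \<rho> \<alpha> * b \<rho> \<beta> * c \<rho> \<gamma>)" .
  qed
  show False by (rule d.contradiction)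
qed

theorem mainTheorem6:
  shows "U7 \<in> carrier_mat 8 8 \<and> unitary_mat U7 \<and> schmidt_rank U7 = 7"
proof -
  have "schmidt_rank U7 = 7"
    unfolding schmidt_rank_def
    by (rule Least_equality) (use upper lower in auto)
  then show ?thesis using U7_carrier U7_unitary by blast
qed

end
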